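(* Let $\pi\in\mathfrak{S}_n$ avoid $231$. Let $A,B,C$ be the blocks of a collection of crossing $3$-cycles of $\pi$ (so $A<B<C$), and let $(e,f)$ with $e<f$ be a $2$-cycle of $\pi$. Then one of the following holds: (1) $f<A$; (2) $A<e<f<B$; (3) $A<e<B<f<C$; (4) $B<e<f<C$; (5) $C<e$.
   Context: A permutation avoids $231$ if there are no indices $i<j<k$ with $\pi_k<\pi_i<\pi_j$. A collection of crossing $3$-cycles of $\pi$ is a nonempty set of $3$-cycles $(a_i,c_i,b_i)$ (meaning $a_i\mapsto c_i\mapsto b_i\mapsto a_i$) of $\pi$, $i=1,\dots,p$, with $a_i<b_i<c_i$, such that $a_i<b_j<c_k$ for all $i,j,k$; its blocks are $A=\{a_i\}$, $B=\{b_i\}$, $C=\{c_i\}$. For sets $S,T$ and an element $t$, $S<T$ means $s<t'$ for all $s\in S,t'\in T$, and $S<t$ (resp. $t<S$) means $s<t$ (resp. $t<s$) for all $s\in S$. *)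

theory Defs
  imports "HOL-Combinatorics.Permutations"
begin

text \<open>Permutations of [n] = {1..n} are functions nat => nat with pi permutes {1..n}.\<close>

definition avoids231 :: "nat \<Rightarrow> (nat \<Rightarrow> nat) \<Rightarrow> bool" where
  "avoids231 n \<pi> \<longleftrightarrow>
     \<not> (\<exists>i j k. 1 \<le> i \<and> i < j \<and> j < k \<and> k \<le> n \<and> \<pi> k < \<pi> i \<and> \<pi> i < \<pi> j)"

text \<open>(a,b,c) represents the 3-cycle (a,c,b): a maps to c, c to b, b to a, with a<b<c.\<close>
definition is_3cycle :: "(nat \<Rightarrow> nat) \<Rightarrow> nat \<times> nat \<times> nat \<Rightarrow> bool" where
  "is_3cycle \<pi> t \<longleftrightarrow> (case t of (a, b, c) \<Rightarrow>
     a < b \<and> b < c \<and> \<pi> a = c \<and> \<pi> c = b \<and> \<pi> b = a)"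

definition crossing_3cycles :: "(nat \<Rightarrow> nat) \<Rightarrow> (nat \<times> nat \<times> nat) set \<Rightarrow> bool" where
  "crossing_3cycles \<pi> S \<longleftrightarrow> S \<noteq> {} \<and> finite S \<and> (\<forall>t\<in>S. is_3cycle \<pi> t) \<and>
     (\<forall>(a1,b1,c1)\<in>S. \<forall>(a2,b2,c2)\<in>S. \<forall>(a3,b3,c3)\<in>S. a1 < b2 \<and> b2 < c3)"

definition blockA :: "(nat \<times> nat \<times> nat) set \<Rightarrow> nat set" where
  "blockA S = (\<lambda>(a,b,c). a) ` S"
definition blockB :: "(nat \<times> nat \<times> nat) set \<Rightarrow> nat set" where
  "blockB S = (\<lambda>(a,b,c). b) ` S"
definition blockC :: "(nat \<times> nat \<times> nat) set \<Rightarrow> nat set" where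
  "blockC S = (\<lambda>(a,b,c). c) ` S"

definition set_lt_elt :: "nat set \<Rightarrow> nat \<Rightarrow> bool" where
  "set_lt_elt S t \<longleftrightarrow> (\<forall>s\<in>S. s < t)"
definition elt_lt_set :: "nat \<Rightarrow> nat set \<Rightarrow> bool" where
  "elt_lt_set t S \<longleftrightarrow> (\<forall>s\<in>S. t < s)"

end

theory Submission imports Defs begin
lemma single:
  fixes e f a b c :: nat and \<pi> :: "nat \<Rightarrow> nat"
  assumes T: "\<And>i j k. i\<in>{e,f,a,b,c} \<Longrightarrow> j\<in>{e,f,a,b,c} \<Longrightarrow> k\<in>{e,f,a,b,c} \<Longrightarrow> i<j \<Longrightarrow> j<k \<Longrightarrow> \<pi> k<\<pi> i \<Longrightarrow> \<pi> i<\<pi> j \<Longrightarrow> False"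
  and "e<f" "\<pi> e = f" "\<pi> f = e"
  and "a<b" "b<c" "\<pi> a = c" "\<pi> c = b" "\<pi> b = a"
  shows "f<a \<or> (a<e \<and> f<b) \<or> (a<e \<and> e<b \<and> b<f \<and> f<c) \<or> (b<e\<and>f<c) \<or> (c<e)"
proof -
  have d: "e \<noteq> a" "e \<noteq> b" "e \<noteq> c" "f \<noteq> a" "f \<noteq> b" "f \<noteq> c"
    using assms(2-) by (metis less_not_refl)+
  have t1: "e<a \<Longrightarrow> a<f \<Longrightarrow> f<c \<Longrightarrow> False" using T[of e a f] assms by auto
  have t2: "b<c \<Longrightarrow> c<f \<Longrightarrow> e<a \<Longrightarrow> False" using T[of b c f] assms by auto
  have t3: "a<e \<Longrightarrow> e<b \<Longrightarrow> c<f \<Longrightarrow> False" using T[of a e b] assms by auto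
  have t4: "a<e \<Longrightarrow> e<c \<Longrightarrow> c<f \<Longrightarrow> False" using T[of a e c] assms by auto
  show ?thesis
  proof (cases "f<a")
    case False
    then have af: "a<f" using d by linarith
    have ae: "a<e"
    proof (rule ccontr)
      assume "\<not> a<e"
      then have ea: "e<a" using d by linarith
      have "c<f" using t1[OF ea af] d by (metis linorder_neqE_nat)
      then show False using t2 ea assms by linarith
    qed
    show ?thesis
    proof (cases "f<b")
      case True then show ?thesis using ae by blast
    next
      case False
      then have bf: "b<f" using d by linarith
      show ?thesis
      proof (cases "e<b")
        case True
        then have "f<c" using t3 ae d by (metis linorder_neqE_nat)
        then show ?thesis using True ae bf by blast
      next
        case False
        then have be: "b<e" using d by linarith
        show ?thesis
        proof (cases "f<c")
          case True then show ?thesis using be by blast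
        next
          case False
          then have "c<f" using d by linarith
          then have "c<e" using t4 ae d by (metis linorder_neqE_nat)
          then show ?thesis by blast
        qed
      qed
    qed
  qed simp
qed

lemma pair:
  fixes e f a1 b1 c1 a2 b2 c2 :: nat and \<pi> :: "nat \<Rightarrow> nat"
  assumes T: "\<And>i j k. i\<in>{e,f,a1,b1,c1,a2,b2,c2} \<Longrightarrow> j\<in>{e,f,a1,b1,c1,a2,b2,c2} \<Longrightarrow> k\<in>{e,f,a1,b1,c1,a2,b2,c2} \<Longrightarrow> i<j \<Longrightarrow> j<k \<Longrightarrow> \<pi> k<\<pi> i \<Longrightarrow> \<pi> i<\<pi> j \<Longrightarrow> False"
  and "e<f" "\<pi> e = f" "\<pi> f = e"
  and "a1<b1" "b1<c1" "\<pi> a1 = c1" "\<pi> c1 = b1" "\<pi> b1 = a1"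
  and "a2<b2" "b2<c2" "\<pi> a2 = c2" "\<pi> c2 = b2" "\<pi> b2 = a2"
  and "a1<b2" "a2<b1" "b1<c2" "b2<c1"
  shows "(f<a1 \<and> f<a2) \<or> (a1<e\<and>a2<e \<and> f<b1 \<and> f<b2) \<or> (a1<e \<and> a2<e \<and> e<b1 \<and> e<b2 \<and> b1<f \<and> b2<f \<and> f<c1 \<and> f<c2) \<or> (b1<e\<and>b2<e\<and>f<c1\<and>f<c2) \<or> (c1<e\<and>c2<e)"
proof -
  have r1: "f<a1 \<or> (a1<e \<and> f<b1) \<or> (a1<e \<and> e<b1 \<and> b1<f \<and> f<c1) \<or> (b1<e\<and>f<c1) \<or> (c1<e)"
    apply (rule single[where \<pi>=\<pi>])
    subgoal for i j k by (rule T[of i j k]) auto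
    using assms by auto
  have r2: "f<a2 \<or> (a2<e \<and> f<b2) \<or> (a2<e \<and> e<b2 \<and> b2<f \<and> f<c2) \<or> (b2<e\<and>f<c2) \<or> (c2<e)"
    apply (rule single[where \<pi>=\<pi>])
    subgoal for i j k by (rule T[of i j k]) auto
    using assms by auto
  have t0: "a1<a2 \<Longrightarrow> a2<b2 \<Longrightarrow> a2<c1 \<Longrightarrow> c1<c2 \<Longrightarrow> False" using T[of a1 a2 b2] assms by auto
  have t1: "a1<e \<Longrightarrow> e<c2 \<Longrightarrow> b2<c1 \<Longrightarrow> c1<f \<Longrightarrow> False" using T[of a1 e c2] assms by auto
  have t2: "a2<a1 \<Longrightarrow> a1<b2 \<Longrightarrow> a2<c2 \<Longrightarrow> c2<c1 \<Longrightarrow> False" using T[of a2 a1 b2] assms by auto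
  have t3: "a2<e \<Longrightarrow> e<c1 \<Longrightarrow> b1<c2 \<Longrightarrow> c2<f \<Longrightarrow> False" using T[of a2 e c1] assms by auto
  have t4: "b1<e \<Longrightarrow> e<b2 \<Longrightarrow> a2<a1 \<Longrightarrow> a1<f \<Longrightarrow> False" using T[of b1 e b2] assms by auto
  have t5: "b1<f \<Longrightarrow> f<b2 \<Longrightarrow> a2<a1 \<Longrightarrow> a1<e \<Longrightarrow> False" using T[of b1 f b2] assms by auto
  have t6: "b2<e \<Longrightarrow> e<b1 \<Longrightarrow> a1<a2 \<Longrightarrow> a2<f \<Longrightarrow> False" using T[of b2 e b1] assms by auto
  have t7: "b2<f \<Longrightarrow> f<b1 \<Longrightarrow> a1<a2 \<Longrightarrow> a2<e \<Longrightarrow> False" using T[of b2 f b1] assms by auto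
  have t8: "e<c1 \<Longrightarrow> c1<c2 \<Longrightarrow> b2<f \<Longrightarrow> f<b1 \<Longrightarrow> False" using T[of e c1 c2] assms by auto
  have t9: "e<c2 \<Longrightarrow> c2<c1 \<Longrightarrow> b1<f \<Longrightarrow> f<b2 \<Longrightarrow> False" using T[of e c2 c1] assms by auto
  have t10: "f<a1 \<Longrightarrow> a1<b2 \<Longrightarrow> a2<e \<Longrightarrow> e<c1 \<Longrightarrow> False" using T[of f a1 b2] assms by auto
  have t11: "f<a2 \<Longrightarrow> a2<b1 \<Longrightarrow> a1<e \<Longrightarrow> e<c2 \<Longrightarrow> False" using T[of f a2 b1] assms by auto
  have t12: "f<c1 \<Longrightarrow> c1<c2 \<Longrightarrow> b2<e \<Longrightarrow> e<b1 \<Longrightarrow> False" using T[of f c1 c2] assms by auto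
  have t13: "f<c2 \<Longrightarrow> c2<c1 \<Longrightarrow> b1<e \<Longrightarrow> e<b2 \<Longrightarrow> False" using T[of f c2 c1] assms by auto
  note tt = t0 t1 t2 t3 t4 t5 t6 t7 t8 t9 t10 t11 t12 t13

  show ?thesis
  proof (cases "a1 = a2")
    case True
    then have "b1 = b2" "c1 = c2" using assms by metis+
    then show ?thesis using r1 True by auto
  next
    case False
    then have "c1 \<noteq> c2" using assms by metis
    with False have ac: "(a1<a2 \<or> a2<a1) \<and> (c1<c2 \<or> c2<c1)" by linarith
    from r1 show ?thesis
    proof (elim disjE)
      assume h1: "f<a1"
      from r2 show ?thesis
      proof (elim disjE)
        assume h2: "f<a2"
        show ?thesis using h1 h2 by auto
      next
        assume h2: "a2<e \<and> f<b2"
        show ?thesis by (insert h1 h2 ac assms(2,5,6,10,11,15-18), elim disjE conjE; ((rule FalseE, rule t10; linarith) | (rule FalseE, rule t2; linarith) | (rule FalseE, linarith)))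
      next
        assume h2: "a2<e \<and> e<b2 \<and> b2<f \<and> f<c2"
        show ?thesis by (insert h1 h2 ac assms(2,5,6,10,11,15-18), elim disjE conjE; ((rule FalseE, linarith)))
      next
        assume h2: "b2<e \<and> f<c2"
        show ?thesis by (insert h1 h2 ac assms(2,5,6,10,11,15-18), elim disjE conjE; ((rule FalseE, linarith)))
      next
        assume h2: "c2<e"
        show ?thesis by (insert h1 h2 ac assms(2,5,6,10,11,15-18), elim disjE conjE; ((rule FalseE, linarith)))
      qed
    next
      assume h1: "a1<e \<and> f<b1"
      from r2 show ?thesis
      proof (elim disjE)
        assume h2: "f<a2"
        show ?thesis by (insert h1 h2 ac assms(2,5,6,10,11,15-18), elim disjE conjE; ((rule FalseE, rule t0; linarith) | (rule FalseE, rule t11; linarith) | (rule FalseE, linarith)))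
      next
        assume h2: "a2<e \<and> f<b2"
        show ?thesis using h1 h2 by auto
      next
        assume h2: "a2<e \<and> e<b2 \<and> b2<f \<and> f<c2"
        show ?thesis by (insert h1 h2 ac assms(2,5,6,10,11,15-18), elim disjE conjE; ((rule FalseE, rule t0; linarith) | (rule FalseE, rule t7; linarith) | (rule FalseE, rule t8; linarith) | (rule FalseE, rule t2; linarith) | (rule FalseE, linarith)))
      next
        assume h2: "b2<e \<and> f<c2"
        show ?thesis by (insert h1 h2 ac assms(2,5,6,10,11,15-18), elim disjE conjE; ((rule FalseE, rule t0; linarith) | (rule FalseE, rule t6; linarith) | (rule FalseE, rule t8; linarith) | (rule FalseE, rule t2; linarith) | (rule FalseE, linarith)))
      next
        assume h2: "c2<e"
        show ?thesis by (insert h1 h2 ac assms(2,5,6,10,11,15-18), elim disjE conjE; ((rule FalseE, linarith)))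
      qed
    next
      assume h1: "a1<e \<and> e<b1 \<and> b1<f \<and> f<c1"
      from r2 show ?thesis
      proof (elim disjE)
        assume h2: "f<a2"
        show ?thesis by (insert h1 h2 ac assms(2,5,6,10,11,15-18), elim disjE conjE; ((rule FalseE, linarith)))
      next
        assume h2: "a2<e \<and> f<b2"
        show ?thesis by (insert h1 h2 ac assms(2,5,6,10,11,15-18), elim disjE conjE; ((rule FalseE, rule t0; linarith) | (rule FalseE, rule t9; linarith) | (rule FalseE, rule t5; linarith) | (rule FalseE, rule t2; linarith) | (rule FalseE, linarith)))
      next
        assume h2: "a2<e \<and> e<b2 \<and> b2<f \<and> f<c2"
        show ?thesis using h1 h2 by auto
      next
        assume h2: "b2<e \<and> f<c2"
        show ?thesis by (insert h1 h2 ac assms(2,5,6,10,11,15-18), elim disjE conjE; ((rule FalseE, rule t0; linarith) | (rule FalseE, rule t6; linarith) | (rule FalseE, rule t12; linarith) | (rule FalseE, rule t2; linarith) | (rule FalseE, linarith)))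
      next
        assume h2: "c2<e"
        show ?thesis by (insert h1 h2 ac assms(2,5,6,10,11,15-18), elim disjE conjE; ((rule FalseE, linarith)))
      qed
    next
      assume h1: "b1<e \<and> f<c1"
      from r2 show ?thesis
      proof (elim disjE)
        assume h2: "f<a2"
        show ?thesis by (insert h1 h2 ac assms(2,5,6,10,11,15-18), elim disjE conjE; ((rule FalseE, linarith)))
      next
        assume h2: "a2<e \<and> f<b2"
        show ?thesis by (insert h1 h2 ac assms(2,5,6,10,11,15-18), elim disjE conjE; ((rule FalseE, rule t0; linarith) | (rule FalseE, rule t9; linarith) | (rule FalseE, rule t4; linarith) | (rule FalseE, rule t2; linarith) | (rule FalseE, linarith)))
      next
        assume h2: "a2<e \<and> e<b2 \<and> b2<f \<and> f<c2"
        show ?thesis by (insert h1 h2 ac assms(2,5,6,10,11,15-18), elim disjE conjE; ((rule FalseE, rule t0; linarith) | (rule FalseE, rule t13; linarith) | (rule FalseE, rule t4; linarith) | (rule FalseE, rule t2; linarith) | (rule FalseE, linarith)))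
      next
        assume h2: "b2<e \<and> f<c2"
        show ?thesis using h1 h2 by auto
      next
        assume h2: "c2<e"
        show ?thesis by (insert h1 h2 ac assms(2,5,6,10,11,15-18), elim disjE conjE; ((rule FalseE, rule t3; linarith) | (rule FalseE, rule t2; linarith) | (rule FalseE, linarith)))
      qed
    next
      assume h1: "c1<e"
      from r2 show ?thesis
      proof (elim disjE)
        assume h2: "f<a2"
        show ?thesis by (insert h1 h2 ac assms(2,5,6,10,11,15-18), elim disjE conjE; ((rule FalseE, linarith)))
      next
        assume h2: "a2<e \<and> f<b2"
        show ?thesis by (insert h1 h2 ac assms(2,5,6,10,11,15-18), elim disjE conjE; ((rule FalseE, linarith)))
      next
        assume h2: "a2<e \<and> e<b2 \<and> b2<f \<and> f<c2"
        show ?thesis by (insert h1 h2 ac assms(2,5,6,10,11,15-18), elim disjE conjE; ((rule FalseE, linarith)))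
      next
        assume h2: "b2<e \<and> f<c2"
        show ?thesis by (insert h1 h2 ac assms(2,5,6,10,11,15-18), elim disjE conjE; ((rule FalseE, rule t0; linarith) | (rule FalseE, rule t1; linarith) | (rule FalseE, linarith)))
      next
        assume h2: "c2<e"
        show ?thesis using h1 h2 by auto
      qed
    qed
  qed
qed

lemma cross_ineq:
  assumes C: "crossing_3cycles \<pi> S" and "(a1,b1,c1)\<in>S" "(a2,b2,c2)\<in>S" "(a3,b3,c3)\<in>S"
  shows "a1<b2 \<and> b2<c3"
proof -
  have H: "\<forall>(a1,b1,c1)\<in>S. \<forall>(a2,b2,c2)\<in>S. \<forall>(a3,b3,c3)\<in>S. a1 < b2 \<and> b2 < c3"
    using C unfolding crossing_3cycles_def by (elim conjE)
  have H1: "\<forall>(a2,b2,c2)\<in>S. \<forall>(a3,b3,c3)\<in>S. a1 < b2 \<and> b2 < c3" using bspec[OF H assms(2)] by simp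
  have H2: "\<forall>(a3,b3,c3)\<in>S. a1 < b2 \<and> b2 < c3" using bspec[OF H1 assms(3)] by simp
  show ?thesis using bspec[OF H2 assms(4)] by simp
qed
lemma cyc:
  assumes C: "crossing_3cycles \<pi> S" and "(a,b,c)\<in>S"
  shows "a<b" "b<c" "\<pi> a = c" "\<pi> c = b" "\<pi> b = a"
proof -
  have "is_3cycle \<pi> (a,b,c)" using assms unfolding crossing_3cycles_def by (elim conjE) (erule bspec)
  then show "a<b" "b<c" "\<pi> a = c" "\<pi> c = b" "\<pi> b = a" unfolding is_3cycle_def by simp_all
qed
lemma moved_in:
  assumes "\<pi> permutes {1..n}" "\<pi> x \<noteq> x"
  shows "1 \<le> x \<and> x \<le> n"
  using assms by (metis atLeastAtMost_iff permutes_not_in)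

lemma pairS:
  fixes n :: nat and \<pi> :: "nat \<Rightarrow> nat" and S :: "(nat \<times> nat \<times> nat) set" and e f :: nat
  assumes P: "\<pi> permutes {1..n}"
    and A: "avoids231 n \<pi>"
    and C: "crossing_3cycles \<pi> S"
    and "e < f" and "\<pi> e = f" and "\<pi> f = e"
    and t1: "(a1,b1,c1) \<in> S" and t2: "(a2,b2,c2) \<in> S"
  shows "(f<a1 \<and> f<a2) \<or> (a1<e\<and>a2<e \<and> f<b1 \<and> f<b2) \<or> (a1<e \<and> a2<e \<and> e<b1 \<and> e<b2 \<and> b1<f \<and> b2<f \<and> f<c1 \<and> f<c2) \<or> (b1<e\<and>b2<e\<and>f<c1\<and>f<c2) \<or> (c1<e\<and>c2<e)"
proof -
  note c1 = cyc[OF C t1]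
  note c2 = cyc[OF C t2]
  have x1: "a1<b2 \<and> b2<c2" using cross_ineq[OF C t1 t2 t2] .
  have x2: "a2<b1 \<and> b1<c2" using cross_ineq[OF C t2 t1 t2] .
  have x3: "a1<b2 \<and> b2<c1" using cross_ineq[OF C t1 t2 t1] .
  have mv: "1 \<le> x \<and> x \<le> n" if "x \<in> {e,f,a1,b1,c1,a2,b2,c2}" for x
  proof (rule moved_in[OF P])
    from that have "x=e \<or> x=f \<or> x=a1 \<or> x=b1 \<or> x=c1 \<or> x=a2 \<or> x=b2 \<or> x=c2" by simp
    then show "\<pi> x \<noteq> x" using c1 c2 assms(4-6) by (elim disjE) simp_all
  qed
  show ?thesis
  proof (rule pair[where \<pi>=\<pi>])
    fix i j k
    assume "i\<in>{e,f,a1,b1,c1,a2,b2,c2}" "j\<in>{e,f,a1,b1,c1,a2,b2,c2}" "k\<in>{e,f,a1,b1,c1,a2,b2,c2}"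
      "i<j" "j<k" "\<pi> k<\<pi> i" "\<pi> i<\<pi> j"
    moreover have "\<not>(1 \<le> i \<and> i < j \<and> j < k \<and> k \<le> n \<and> \<pi> k < \<pi> i \<and> \<pi> i < \<pi> j)"
      using A unfolding avoids231_def by blast
    ultimately show False using mv[of i] mv[of k] by blast
  qed (use c1 c2 x1 x2 x3 assms(4-6) in auto)
qed

theorem lemma3p4:
  fixes n :: nat and \<pi> :: "nat \<Rightarrow> nat" and S :: "(nat \<times> nat \<times> nat) set" and e f :: nat
  assumes "\<pi> permutes {1..n}"
    and "avoids231 n \<pi>"
    and "crossing_3cycles \<pi> S"
    and "e < f" and "\<pi> e = f" and "\<pi> f = e"
  shows "elt_lt_set f (blockA S)
      \<or> (set_lt_elt (blockA S) e \<and> e < f \<and> elt_lt_set f (blockB S))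
      \<or> (set_lt_elt (blockA S) e \<and> elt_lt_set e (blockB S) \<and> set_lt_elt (blockB S) f \<and> elt_lt_set f (blockC S))
      \<or> (set_lt_elt (blockB S) e \<and> e < f \<and> elt_lt_set f (blockC S))
      \<or> set_lt_elt (blockC S) e"
proof -
  note R = pairS[OF assms]
  obtain a0 b0 c0 where t0: "(a0,b0,c0) \<in> S" using assms(3) unfolding crossing_3cycles_def by auto
  have o0: "a0<b0" "b0<c0" using assms(3) t0 unfolding crossing_3cycles_def is_3cycle_def by auto
  have R0: "\<And>a b c. (a,b,c) \<in> S \<Longrightarrow> (f<a0 \<and> f<a) \<or> (a0<e\<and>a<e \<and> f<b0 \<and> f<b) \<or> (a0<e \<and> a<e \<and> e<b0 \<and> e<b \<and> b0<f \<and> b<f \<and> f<c0 \<and> f<c) \<or> (b0<e\<and>b<e\<and>f<c0\<and>f<c) \<or> (c0<e\<and>c<e)"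
    using R[OF t0] by blast
  have BA: "elt_lt_set x (blockA S) \<longleftrightarrow> (\<forall>a b c. (a,b,c)\<in>S \<longrightarrow> x<a)"
   and BB: "elt_lt_set x (blockB S) \<longleftrightarrow> (\<forall>a b c. (a,b,c)\<in>S \<longrightarrow> x<b)"
   and BC: "elt_lt_set x (blockC S) \<longleftrightarrow> (\<forall>a b c. (a,b,c)\<in>S \<longrightarrow> x<c)"
   and SA: "set_lt_elt (blockA S) x \<longleftrightarrow> (\<forall>a b c. (a,b,c)\<in>S \<longrightarrow> a<x)"
   and SB: "set_lt_elt (blockB S) x \<longleftrightarrow> (\<forall>a b c. (a,b,c)\<in>S \<longrightarrow> b<x)"
   and SC: "set_lt_elt (blockC S) x \<longleftrightarrow> (\<forall>a b c. (a,b,c)\<in>S \<longrightarrow> c<x)" for x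
    unfolding elt_lt_set_def set_lt_elt_def blockA_def blockB_def blockC_def by auto
  have G: "(\<forall>a b c. (a,b,c)\<in>S \<longrightarrow> Q a b c)"
    if h: "Q a0 b0 c0" and ex: "\<And>a b c. (a,b,c)\<in>S \<Longrightarrow> (f<a0 \<and> f<a) \<or> (a0<e\<and>a<e \<and> f<b0 \<and> f<b) \<or> (a0<e \<and> a<e \<and> e<b0 \<and> e<b \<and> b0<f \<and> b<f \<and> f<c0 \<and> f<c) \<or> (b0<e\<and>b<e\<and>f<c0\<and>f<c) \<or> (c0<e\<and>c<e) \<Longrightarrow> Q a b c"
    for Q using ex R0 by blast
  from R0[OF t0] show ?thesis
  proof (elim disjE conjE)
    assume h: "f<a0"
    have "\<forall>a b c. (a,b,c)\<in>S \<longrightarrow> f<a"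
      by (rule G[where Q="\<lambda>a b c. f<a"]; insert h o0 assms(4); (elim disjE conjE)?; linarith)
    then show ?thesis unfolding BA BB BC SA SB SC by blast
  next
    assume h: "a0<e" "f<b0"
    have "\<forall>a b c. (a,b,c)\<in>S \<longrightarrow> a<e \<and> f<b"
      by (rule G[where Q="\<lambda>a b c. a<e \<and> f<b"]; insert h o0 assms(4); (elim disjE conjE)?; (intro conjI)?; linarith)
    then show ?thesis using assms(4) unfolding BA BB BC SA SB SC by blast
  next
    assume h: "a0<e" "e<b0" "b0<f" "f<c0"
    have "\<forall>a b c. (a,b,c)\<in>S \<longrightarrow> a<e \<and> e<b \<and> b<f \<and> f<c"
      by (rule G[where Q="\<lambda>a b c. a<e \<and> e<b \<and> b<f \<and> f<c"]; insert h o0 assms(4); (elim disjE conjE)?; (intro conjI)?; linarith)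
    then show ?thesis unfolding BA BB BC SA SB SC by blast
  next
    assume h: "b0<e" "f<c0"
    have "\<forall>a b c. (a,b,c)\<in>S \<longrightarrow> b<e \<and> f<c"
      by (rule G[where Q="\<lambda>a b c. b<e \<and> f<c"]; insert h o0 assms(4); (elim disjE conjE)?; (intro conjI)?; linarith)
    then show ?thesis using assms(4) unfolding BA BB BC SA SB SC by blast
  next
    assume h: "c0<e"
    have "\<forall>a b c. (a,b,c)\<in>S \<longrightarrow> c<e"
      by (rule G[where Q="\<lambda>a b c. c<e"]; insert h o0 assms(4); (elim disjE conjE)?; linarith)
    then show ?thesis unfolding BA BB BC SA SB SC by blast
  qed
qed

end
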